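(* Let $A$ be a set and let $\mathcal{E}$ be a set of subsets of $A$ such that (C1) for every $K\subseteq A$, $K\in\mathcal{E}$ if and only if $A\setminus K\notin\mathcal{E}$; and (C2) if $K\in\mathcal{E}$ and $K\subseteq L\subseteq A$, then $L\in\mathcal{E}$. Suppose each member of $A$ chooses one of the six strict total orders on three candidates $a,b,c$, labelled by $\mathbb{Z}/6\mathbb{Z}$ as: $1: a>b>c$, $2: a>c>b$, $3: c>a>b$, $4: c>b>a$, $5: b>c>a$, $6: b>a>c$. For $p\in\mathbb{Z}/6\mathbb{Z}$ let $K(p)$ be the set of members who chose ranking $p$, and $K(p,q,r)=K(p)\cup K(q)\cup K(r)$. Define the collective preference by: for distinct candidates $x,y$, $x$ is collectively preferred to $y$ iff the set of members who rank $x$ above $y$ belongs to $\mathcal{E}$. If the collective preference is a strict total order on $\{a,b,c\}$, then there exists $p$ such that $K(p,p+1,p+2)\in\mathcal{E}$ and $K(p+1,p+2,p+3)\in\mathcal{E}$.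
   Context: Indices are taken modulo $6$. *)

theory Defs
  imports Main "HOL-Library.Numeral_Type"
begin

datatype cand = ca | cb | cc

text \<open>The six strict rankings, labelled by Z/6Z (label 6 is 0 in type 6), best first.\<close>
definition ranking :: "6 \<Rightarrow> cand list" where
  "ranking p =
     (if p = 1 then [ca, cb, cc]
      else if p = 2 then [ca, cc, cb]
      else if p = 3 then [cc, ca, cb]
      else if p = 4 then [cc, cb, ca]
      else if p = 5 then [cb, cc, ca]
      else [cb, ca, cc])"

definition prefers :: "6 \<Rightarrow> cand \<Rightarrow> cand \<Rightarrow> bool" where
  "prefers p x y \<longleftrightarrow>
     (\<exists>i j. i < j \<and> j < length (ranking p) \<and> ranking p ! i = x \<and> ranking p ! j = y)"

definition Kset :: "'v set \<Rightarrow> ('v \<Rightarrow> 6) \<Rightarrow> 6 \<Rightarrow> 'v set" where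
  "Kset A ch p = {v \<in> A. ch v = p}"

definition K3 :: "'v set \<Rightarrow> ('v \<Rightarrow> 6) \<Rightarrow> 6 \<Rightarrow> 6 \<Rightarrow> 6 \<Rightarrow> 'v set" where
  "K3 A ch p q r = Kset A ch p \<union> Kset A ch q \<union> Kset A ch r"

definition collective :: "'v set \<Rightarrow> 'v set set \<Rightarrow> ('v \<Rightarrow> 6) \<Rightarrow> cand rel" where
  "collective A E ch = {(x, y). x \<noteq> y \<and> {v \<in> A. prefers (ch v) x y} \<in> E}"

end

theory Submission imports Defs begin
lemma ij3: "(\<exists>i j. i < j \<and> j < Suc (Suc (Suc 0)) \<and> P i j) \<longleftrightarrow> P 0 1 \<or> P 0 2 \<or> P (1::nat) (2::nat)"
proof
  assume "\<exists>i j. i < j \<and> j < Suc (Suc (Suc 0)) \<and> P i j"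
  then obtain i j where "i < j" "j < 3" "P i j" by auto
  then have "(i = 0 \<and> j = 1) \<or> (i = 0 \<and> j = 2) \<or> (i = 1 \<and> j = 2)" by auto
  then show "P 0 1 \<or> P 0 2 \<or> P 1 2" using \<open>P i j\<close> by auto
next
  assume "P 0 1 \<or> P 0 2 \<or> P 1 2"
  then show "\<exists>i j. i < j \<and> j < Suc (Suc (Suc 0)) \<and> P i j" by (metis lessI less_SucI numeral_2_eq_2 One_nat_def zero_less_Suc)
qed
lemma pr3: "(\<exists>i j. i < j \<and> j < Suc (Suc (Suc 0)) \<and> [u,v,w] ! i = x \<and> [u,v,w] ! j = y)
   \<longleftrightarrow> (x=u\<and>y=v)\<or>(x=u\<and>y=w)\<or>(x=v\<and>y=w)"
  by (subst ij3[where P="\<lambda>i j. [u,v,w] ! i = x \<and> [u,v,w] ! j = y"]) (auto simp: numeral_2_eq_2)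
lemma six: "(p::6) = 0 \<or> p = 1 \<or> p = 2 \<or> p = 3 \<or> p = 4 \<or> p = 5"
proof -
  have "{0,1,2,3,4,5} = (UNIV::6 set)"
    by (rule card_subset_eq) simp_all
  then show ?thesis by (metis UNIV_I empty_iff insert_iff)
qed
lemma palt: "prefers p x y \<longleftrightarrow> (ranking p ! 0 = x \<and> ranking p ! 1 = y) \<or> (ranking p ! 0 = x \<and> ranking p ! 2 = y) \<or> (ranking p ! 1 = x \<and> ranking p ! 2 = y)"
proof -
  have "length (ranking p) = Suc (Suc (Suc 0))" by (simp add: ranking_def)
  then show ?thesis unfolding prefers_def
    by (simp only: ij3[where P="\<lambda>i j. ranking p ! i = x \<and> ranking p ! j = y"])
qed
lemma pab: "prefers p ca cb \<longleftrightarrow> p = 1 \<or> p = 2 \<or> p = 3"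
  using six[of p] by (auto simp: palt ranking_def)
lemma pac: "prefers p ca cc \<longleftrightarrow> p = 0 \<or> p = 1 \<or> p = 2"
  using six[of p] by (auto simp: palt ranking_def)
lemma pbc: "prefers p cb cc \<longleftrightarrow> p = 5 \<or> p = 0 \<or> p = 1"
  using six[of p] by (auto simp: palt ranking_def)
lemma pba: "prefers p cb ca \<longleftrightarrow> p = 4 \<or> p = 5 \<or> p = 0"
  using six[of p] by (auto simp: palt ranking_def)
lemma pca: "prefers p cc ca \<longleftrightarrow> p = 3 \<or> p = 4 \<or> p = 5"
  using six[of p] by (auto simp: palt ranking_def)
lemma pcb: "prefers p cc cb \<longleftrightarrow> p = 2 \<or> p = 3 \<or> p = 4"
  using six[of p] by (auto simp: palt ranking_def)
lemma k3: "K3 A ch p q r = {v\<in>A. ch v = p \<or> ch v = q \<or> ch v = r}"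
  by (auto simp: K3_def Kset_def)
lemma t: "(5::6) + 1 = 0" "(5::6)+2 = 1" "(5::6)+3=2" "(4::6)+2=0" "(4::6)+3 = 1" "(3::6)+3=0" "(6::6) = 0" "(7::6) = 1" "(8::6) = 2" by simp_all
theorem mainTheorem4:
  fixes A :: "'v set" and E :: "'v set set" and ch :: "'v \<Rightarrow> 6"
  assumes E_sub: "E \<subseteq> Pow A"
    and C1: "\<And>K. K \<subseteq> A \<Longrightarrow> (K \<in> E \<longleftrightarrow> A - K \<notin> E)"
    and C2: "\<And>K L. K \<in> E \<Longrightarrow> K \<subseteq> L \<Longrightarrow> L \<subseteq> A \<Longrightarrow> L \<in> E"
    and lin: "strict_linear_order_on UNIV (collective A E ch)"
  shows "\<exists>p. K3 A ch p (p + 1) (p + 2) \<in> E \<and> K3 A ch (p + 1) (p + 2) (p + 3) \<in> E"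
proof -
  let ?R = "collective A E ch"
  have tr: "trans ?R" and ir: "irrefl ?R" and tot: "total_on UNIV ?R"
    using lin by (auto simp: strict_linear_order_on_def)
  have ab: "(ca,cb) \<in> ?R \<longleftrightarrow> K3 A ch 1 2 3 \<in> E"
    by (simp add: collective_def pab k3)
  have ba: "(cb,ca) \<in> ?R \<longleftrightarrow> K3 A ch 4 5 0 \<in> E"
    by (simp add: collective_def pba k3)
  have ac: "(ca,cc) \<in> ?R \<longleftrightarrow> K3 A ch 0 1 2 \<in> E"
    by (simp add: collective_def pac k3)
  have ca: "(cc,ca) \<in> ?R \<longleftrightarrow> K3 A ch 3 4 5 \<in> E"
    by (simp add: collective_def pca k3)
  have bc: "(cb,cc) \<in> ?R \<longleftrightarrow> K3 A ch 5 0 1 \<in> E"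
    by (simp add: collective_def pbc k3)
  have cb: "(cc,cb) \<in> ?R \<longleftrightarrow> K3 A ch 2 3 4 \<in> E"
    by (simp add: collective_def pcb k3)
  have t1: "(ca,cb) \<in> ?R \<or> (cb,ca) \<in> ?R" using tot by (auto simp: total_on_def)
  have t2: "(ca,cc) \<in> ?R \<or> (cc,ca) \<in> ?R" using tot by (auto simp: total_on_def)
  have t3: "(cb,cc) \<in> ?R \<or> (cc,cb) \<in> ?R" using tot by (auto simp: total_on_def)
  have nc1: "\<not> ((ca,cb) \<in> ?R \<and> (cb,cc) \<in> ?R \<and> (cc,ca) \<in> ?R)"
    using tr ir by (meson irrefl_def transD)
  have nc2: "\<not> ((cb,ca) \<in> ?R \<and> (ca,cc) \<in> ?R \<and> (cc,cb) \<in> ?R)"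
    using tr ir by (meson irrefl_def transD)
  have w0: "K3 A ch 0 1 2 \<in> E \<and> K3 A ch 1 2 3 \<in> E \<Longrightarrow> ?thesis"
    by (rule exI[of _ 0]) simp
  have w1: "K3 A ch 1 2 3 \<in> E \<and> K3 A ch 2 3 4 \<in> E \<Longrightarrow> ?thesis"
    by (rule exI[of _ 1]) simp
  have w2: "K3 A ch 2 3 4 \<in> E \<and> K3 A ch 3 4 5 \<in> E \<Longrightarrow> ?thesis"
    by (rule exI[of _ 2]) simp
  have w3: "K3 A ch 3 4 5 \<in> E \<and> K3 A ch 4 5 0 \<in> E \<Longrightarrow> ?thesis"
    by (rule exI[of _ 3]) (simp add: t)
  have w4: "K3 A ch 4 5 0 \<in> E \<and> K3 A ch 5 0 1 \<in> E \<Longrightarrow> ?thesis"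
    by (rule exI[of _ 4]) (simp add: t)
  have w5: "K3 A ch 5 0 1 \<in> E \<and> K3 A ch 0 1 2 \<in> E \<Longrightarrow> ?thesis"
    by (rule exI[of _ 5]) (simp add: t)
  show ?thesis
    using t1 t2 t3 nc1 nc2 w0 w1 w2 w3 w4 w5 ab ba ac ca bc cb by blast
qed

end
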